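(* Let $\mathcal{Z}$ be a domain with a probability distribution $\mathcal{D}$, let $\mathcal{H}$ be a hypothesis class, let $\ell:\mathcal{H}\times\mathcal{Z}\times\mathcal{Z}\to[0,B]$ be a bounded pairwise loss function, and let $h^\ast\in\arg\min_{h\in\mathcal{H}}\mathcal{L}(h)$ be a population risk minimizer. Let $z_1,\dots,z_n$ be drawn i.i.d. from $\mathcal{D}$. Then for any $\delta>0$, with probability at least $1-\delta$, \[ \frac{1}{n-1}\sum_{t=2}^n\hat{\mathcal{L}}_t(h^\ast) \leq \mathcal{L}(h^\ast) + \frac{2}{n-1}\sum_{t=2}^n\mathcal{R}_{t-1}(\ell\circ\mathcal{H}) + 3B\sqrt{\frac{\log\frac{1}{\delta}}{n-1}}. \]
   Context: Population risk: $\mathcal{L}(h)=\mathbb{E}_{z,z'}[\ell(h,z,z')]$ with $z,z'$ independent draws from $\mathcal{D}$. All-pairs penalty: $\hat{\mathcal{L}}_t(h)=\frac{1}{t-1}\sum_{\tau=1}^{t-1}\ell(h,z_t,z_\tau)$. Composite class $\ell\circ\mathcal{H}=\{(z,z')\mapsto \ell(h,z,z'): h\in\mathcal{H}\}$. For a class $\mathcal{G}$ of functions on $\mathcal{Z}\times\mathcal{Z}$, $\mathcal{R}_m(\mathcal{G})=\mathbb{E}\left[\sup_{g\in\mathcal{G}}\frac{1}{m}\sum_{\tau=1}^m\epsilon_\tau g(z,z_\tau)\right]$, the expectation over i.i.d. Rademacher signs $\epsilon_\tau$ and independent $z,z_1,\dots,z_m\sim\mathcal{D}$. *)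

theory Defs
  imports "HOL-Probability.Probability"
begin

definition pop_risk :: "'z measure \<Rightarrow> ('h \<Rightarrow> 'z \<Rightarrow> 'z \<Rightarrow> real) \<Rightarrow> 'h \<Rightarrow> real" where
  "pop_risk D l h = (\<integral>z. (\<integral>z'. l h z z' \<partial>D) \<partial>D)"

definition all_pairs_penalty :: "('h \<Rightarrow> 'z \<Rightarrow> 'z \<Rightarrow> real) \<Rightarrow> 'h \<Rightarrow> (nat \<Rightarrow> 'z) \<Rightarrow> nat \<Rightarrow> real" where
  "all_pairs_penalty l h zs t = (1 / (real t - 1)) * (\<Sum>\<tau>=1..t-1. l h (zs t) (zs \<tau>))"

definition rademacher_complexity ::
  "'z measure \<Rightarrow> 'h set \<Rightarrow> ('h \<Rightarrow> 'z \<Rightarrow> 'z \<Rightarrow> real) \<Rightarrow> nat \<Rightarrow> real" where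
  "rademacher_complexity D H l m =
     (\<integral>zs. (\<Sum>\<epsilon>\<in>PiE {1..m} (\<lambda>_. {-1, 1::real}).
              (SUP h\<in>H. (1 / real m) * (\<Sum>\<tau>=1..m. \<epsilon> \<tau> * l h (zs 0) (zs \<tau>)))) / 2 ^ m
      \<partial>(PiM {0..m} (\<lambda>_. D)))"

end

theory Submission
  imports Defs "HOL-Analysis.Harmonic_Numbers"
begin


locale pw = prob_space D for D :: "'z measure" +
  fixes f :: "'z \<Rightarrow> 'z \<Rightarrow> real" and B :: real
  assumes f_meas[measurable]: "(\<lambda>(z, z'). f z z') \<in> borel_measurable (D \<Otimes>\<^sub>M D)"
    and f_bnd: "\<And>z z'. z \<in> space D \<Longrightarrow> z' \<in> space D \<Longrightarrow> 0 \<le> f z z' \<and> f z z' \<le> B"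
begin

definition "g z' = (\<integral>z. f z z' \<partial>D)"
definition "LL = (\<integral>z. (\<integral>z'. f z z' \<partial>D) \<partial>D)"

lemma f_meas2[measurable (raw)]:
  assumes "a \<in> measurable M D" "b \<in> measurable M D"
  shows "(\<lambda>x. f (a x) (b x)) \<in> borel_measurable M"
proof -
  have "(\<lambda>x. (a x, b x)) \<in> measurable M (D \<Otimes>\<^sub>M D)" using assms by measurable
  from measurable_compose[OF this f_meas] show ?thesis by simp
qed

lemma f_swap_meas: "(\<lambda>(z', z). f z z') \<in> borel_measurable (D \<Otimes>\<^sub>M D)"
  by measurable

lemma g_meas[measurable]: "g \<in> borel_measurable D"
  unfolding g_def
  using borel_measurable_lebesgue_integral[OF f_swap_meas] by simp

lemma f_int1: "z' \<in> space D \<Longrightarrow> integrable D (\<lambda>z. f z z')"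
  by (rule integrable_const_bound[where B=B]) (auto dest: f_bnd[of _ z'] intro!: AE_I2)

lemma f_int2: "z \<in> space D \<Longrightarrow> integrable D (\<lambda>z'. f z z')"
  by (rule integrable_const_bound[where B=B]) (auto dest: f_bnd[of z] intro!: AE_I2)

lemma B_nonneg: "0 \<le> B"
proof -
  obtain z where "z \<in> space D" using not_empty by blast
  thus ?thesis using f_bnd[of z z] by auto
qed

lemma g_bnd: "z' \<in> space D \<Longrightarrow> 0 \<le> g z' \<and> g z' \<le> B"
proof -
  assume z': "z' \<in> space D"
  have "0 \<le> g z'" unfolding g_def by (rule integral_nonneg_AE) (auto intro!: AE_I2 f_bnd[OF _ z', THEN conjunct1])
  moreover have "g z' \<le> (\<integral>z. B \<partial>D)" unfolding g_def
    by (rule integral_mono) (auto intro: f_int1 z' f_bnd[OF _ z', THEN conjunct2])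
  ultimately show ?thesis by (simp add: prob_space)
qed

lemma g_int: "integrable D g"
  by (rule integrable_const_bound[where B=B]) (auto dest: g_bnd intro!: AE_I2)

lemma LL_eq: "LL = (\<integral>z. g z \<partial>D)"
proof -
  interpret pp: pair_sigma_finite D D by unfold_locales
  interpret pD: prob_space "D \<Otimes>\<^sub>M D" by (rule prob_space_pair) unfold_locales
  have "integrable (D \<Otimes>\<^sub>M D) (case_prod f)"
    by (rule pD.integrable_const_bound[where B=B])
       (auto intro!: AE_I2 simp: space_pair_measure, metis abs_of_nonneg f_bnd)
  from pp.Fubini_integral[OF this] show ?thesis unfolding LL_def g_def by simp
qed

end


context pw begin

definition "w (n::nat) (t::nat) = (1/(real n - 1)) * (1/(real t - 1))"
definition "W (n::nat) (k::nat) = (harm (n-1) - harm (k-1)) / (real n - 1)"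
definition "Phi n k x = (\<Sum>t\<in>{1..k}. w n t * (\<Sum>\<tau>\<in>{1..<t}. (f (x t) (x \<tau>) - LL)))
                         + W n k * (\<Sum>\<tau>\<in>{1..k}. (g (x \<tau>) - LL))"
definition "Dl n k x y = w n (Suc k) * (\<Sum>\<tau>\<in>{1..k}. (f y (x \<tau>) - g (x \<tau>))) + W n (Suc k) * (g y - LL)"

lemma W_step: "W n k = W n (Suc k) + w n (Suc k)"
proof (cases k)
  case 0 thus ?thesis by (simp add: W_def w_def)
next
  case (Suc j)
  have "harm (Suc j) = harm j + 1 / real (Suc j)" by (simp add: harm_Suc inverse_eq_divide)
  hence h: "harm (Suc j) = harm j + 1 / (real j + 1)" by simp
  have e1: "W n k = (harm (n-1) - harm j)/(real n - 1)" using Suc by (simp add: W_def)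
  have e2: "W n (Suc k) = (harm (n-1) - harm j - 1/(real j+1))/(real n - 1)" using Suc h by (simp add: W_def)
  have e3: "w n (Suc k) = (1/(real j + 1))/(real n - 1)" using Suc by (simp add: w_def)
  show ?thesis unfolding e1 e2 e3 by (simp add: diff_divide_distrib)
qed

lemma Phi_step: "Phi n (Suc k) (x(Suc k := y)) = Phi n k x + Dl n k x y"
proof -
  have A: "(\<Sum>t\<in>{1..Suc k}. w n t * (\<Sum>\<tau>\<in>{1..<t}. (f ((x(Suc k := y)) t) ((x(Suc k := y)) \<tau>) - LL)))
     = (\<Sum>t\<in>{1..k}. w n t * (\<Sum>\<tau>\<in>{1..<t}. (f (x t) (x \<tau>) - LL)))
       + w n (Suc k) * (\<Sum>\<tau>\<in>{1..k}. (f y (x \<tau>) - LL))"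
  proof -
    have "(\<Sum>t\<in>{1..k}. w n t * (\<Sum>\<tau>\<in>{1..<t}. (f ((x(Suc k := y)) t) ((x(Suc k := y)) \<tau>) - LL)))
        = (\<Sum>t\<in>{1..k}. w n t * (\<Sum>\<tau>\<in>{1..<t}. (f (x t) (x \<tau>) - LL)))"
      by (intro sum.cong refl arg_cong2[where f="(*)"]) auto
    moreover have "{1..<Suc k} = {1..k}" by auto
    ultimately show ?thesis by (simp add: atLeastAtMostSuc_conv)
  qed
  have B: "(\<Sum>\<tau>\<in>{1..Suc k}. (g ((x(Suc k := y)) \<tau>) - LL)) = (\<Sum>\<tau>\<in>{1..k}. (g (x \<tau>) - LL)) + (g y - LL)"
  proof -
    have "(\<Sum>\<tau>\<in>{1..k}. (g ((x(Suc k := y)) \<tau>) - LL)) = (\<Sum>\<tau>\<in>{1..k}. (g (x \<tau>) - LL))"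
      by (intro sum.cong) auto
    thus ?thesis by (simp add: atLeastAtMostSuc_conv)
  qed
  have C: "(\<Sum>\<tau>\<in>{1..k}. (f y (x \<tau>) - LL)) = (\<Sum>\<tau>\<in>{1..k}. (f y (x \<tau>) - g (x \<tau>))) + (\<Sum>\<tau>\<in>{1..k}. (g (x \<tau>) - LL))"
    by (simp add: sum.distrib[symmetric])
  show ?thesis unfolding Phi_def Dl_def A B C W_step[of n k]
    by (simp add: algebra_simps)
qed

end


context pw begin

lemma w_nonneg: "n \<ge> 2 \<Longrightarrow> 0 \<le> w n (Suc t)"
  by (auto simp: w_def)

lemma W_nonneg: "n \<ge> 2 \<Longrightarrow> k \<le> n \<Longrightarrow> 0 \<le> W n k"
  unfolding W_def by (intro divide_nonneg_nonneg) (auto intro!: harm_mono simp: algebra_simps)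

lemma Dl_hoeff:
  assumes n: "n \<ge> 2" and k: "Suc k \<le> n" and lam: "lam > 0"
    and x: "\<And>\<tau>. \<tau> \<in> {1..k} \<Longrightarrow> x \<tau> \<in> space D"
  shows "(\<integral>\<^sup>+ y. ennreal (exp (lam * Dl n k x y)) \<partial>D)
           \<le> ennreal (exp (lam\<^sup>2 * (B * (w n (Suc k) * real k + W n (Suc k)))\<^sup>2 / 8))"
proof -
  define ww where "ww = w n (Suc k)"
  define WW where "WW = W n (Suc k)"
  have ww0: "0 \<le> ww" unfolding ww_def using w_nonneg n by simp
  have WW0: "0 \<le> WW" unfolding WW_def using W_nonneg n k by simp
  define C where "C = - ww * (\<Sum>\<tau>\<in>{1..k}. g (x \<tau>)) - WW * LL"
  define F where "F = Dl n k x"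
  have Feq: "F y = ww * (\<Sum>\<tau>\<in>{1..k}. f y (x \<tau>)) + WW * g y + C" for y
    unfolding F_def Dl_def C_def ww_def[symmetric] WW_def[symmetric]
    by (simp add: sum_subtractf algebra_simps)
  have Fm: "F \<in> borel_measurable D"
  proof -
    have "(\<lambda>y. f y (x \<tau>)) \<in> borel_measurable D" if "\<tau> \<in> {1..k}" for \<tau>
      using x[OF that] by measurable
    hence "(\<lambda>y. ww * (\<Sum>\<tau>\<in>{1..k}. f y (x \<tau>)) + WW * g y + C) \<in> borel_measurable D"
      by (intro borel_measurable_add borel_measurable_times borel_measurable_sum) auto
    thus ?thesis using Feq by presburger
  qed
  have Fint: "F y \<in> {C .. C + B * (ww * real k + WW)}" if y: "y \<in> space D" for y
  proof -
    have s0: "0 \<le> (\<Sum>\<tau>\<in>{1..k}. f y (x \<tau>))" by (intro sum_nonneg) (use f_bnd[OF y x] in auto)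
    have "(\<Sum>\<tau>\<in>{1..k}. f y (x \<tau>)) \<le> (\<Sum>\<tau>\<in>{1..k}. B)" by (intro sum_mono) (use f_bnd[OF y x] in auto)
    hence s1: "(\<Sum>\<tau>\<in>{1..k}. f y (x \<tau>)) \<le> real k * B" by simp
    have g: "0 \<le> g y" "g y \<le> B" using g_bnd[OF y] by auto
    have "ww * (\<Sum>\<tau>\<in>{1..k}. f y (x \<tau>)) \<le> ww * (real k * B)" by (rule mult_left_mono[OF s1 ww0])
    moreover have "WW * g y \<le> WW * B" by (rule mult_left_mono[OF g(2) WW0])
    moreover have "0 \<le> ww * (\<Sum>\<tau>\<in>{1..k}. f y (x \<tau>))" using ww0 s0 by simp
    moreover have "0 \<le> WW * g y" using WW0 g by simp
    ultimately show ?thesis unfolding Feq by (simp add: algebra_simps)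
  qed
  have E0: "(\<integral>y. F y \<partial>D) = 0"
  proof -
    have i1: "integrable D (\<lambda>y. f y (x \<tau>) - g (x \<tau>))" if "\<tau> \<in> {1..k}" for \<tau>
      using f_int1[OF x[OF that]] by simp
    have z1: "(\<integral>y. (\<Sum>\<tau>\<in>{1..k}. (f y (x \<tau>) - g (x \<tau>))) \<partial>D) = 0"
    proof -
      have "(\<integral>y. (\<Sum>\<tau>\<in>{1..k}. (f y (x \<tau>) - g (x \<tau>))) \<partial>D)
            = (\<Sum>\<tau>\<in>{1..k}. (\<integral>y. (f y (x \<tau>) - g (x \<tau>)) \<partial>D))"
        by (rule Bochner_Integration.integral_sum) (rule i1)
      also have "\<dots> = (\<Sum>\<tau>\<in>{1..k}. 0)"
        by (intro sum.cong refl) (simp add: f_int1[OF x] g_def prob_space)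
      finally show ?thesis by simp
    qed
    have z2: "(\<integral>y. (g y - LL) \<partial>D) = 0" using g_int by (simp add: LL_eq prob_space)
    have "(\<integral>y. F y \<partial>D) = (\<integral>y. ww * (\<Sum>\<tau>\<in>{1..k}. (f y (x \<tau>) - g (x \<tau>))) + WW * (g y - LL) \<partial>D)"
      unfolding F_def Dl_def ww_def WW_def ..
    also have "\<dots> = ww * (\<integral>y. (\<Sum>\<tau>\<in>{1..k}. (f y (x \<tau>) - g (x \<tau>))) \<partial>D) + WW * (\<integral>y. (g y - LL) \<partial>D)"
    proof -
      have a: "integrable D (\<lambda>y. ww * (\<Sum>\<tau>\<in>{1..k}. (f y (x \<tau>) - g (x \<tau>))))"
        using i1 by (intro integrable_mult_right Bochner_Integration.integrable_sum) auto
      have b: "integrable D (\<lambda>y. WW * (g y - LL))"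
        using g_int by (intro integrable_mult_right Bochner_Integration.integrable_diff) auto
      show ?thesis using Bochner_Integration.integral_add[OF a b] by simp
    qed
    finally show ?thesis using z1 z2 by simp
  qed
  interpret H: interval_bounded_random_variable D F C "C + B * (ww * real k + WW)"
    by unfold_locales (use Fm Fint in \<open>auto intro!: AE_I2\<close>)
  have "(\<integral>\<^sup>+ y. ennreal (exp (lam * F y)) \<partial>D) \<le> ennreal (exp (lam\<^sup>2 * (C + B * (ww * real k + WW) - C)\<^sup>2 / 8))"
    by (rule H.Hoeffdings_lemma_nn_integral_0[OF lam E0])
  thus ?thesis unfolding F_def ww_def WW_def by simp
qed

end


context pw begin

lemma Phi_meas: "Phi n k \<in> borel_measurable (PiM {1..k} (\<lambda>_. D))"
  unfolding Phi_def by measurable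

lemma Dl_meas:
  assumes x: "\<And>\<tau>. \<tau> \<in> {1..k} \<Longrightarrow> x \<tau> \<in> space D"
  shows "Dl n k x \<in> borel_measurable D"
proof -
  have "(\<lambda>y. f y (x \<tau>) - g (x \<tau>)) \<in> borel_measurable D" if "\<tau> \<in> {1..k}" for \<tau>
    using x[OF that] by measurable
  hence "(\<lambda>y. w n (Suc k) * (\<Sum>\<tau>\<in>{1..k}. (f y (x \<tau>) - g (x \<tau>))) + W n (Suc k) * (g y - LL)) \<in> borel_measurable D"
    by (intro borel_measurable_add borel_measurable_times borel_measurable_sum) auto
  thus ?thesis unfolding Dl_def[abs_def] .
qed

lemma mgf_bound:
  assumes n: "n \<ge> 2" and lam: "lam > 0"
  shows "k \<le> n \<Longrightarrow> (\<integral>\<^sup>+ x. ennreal (exp (lam * Phi n k x)) \<partial>PiM {1..k} (\<lambda>_. D))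
      \<le> ennreal (exp (lam\<^sup>2 * (\<Sum>j<k. (B * (w n (Suc j) * real j + W n (Suc j)))\<^sup>2) / 8))"
proof (induction k)
  case 0
  interpret P0: prob_space "PiM {} (\<lambda>_. D)" by (rule prob_space_PiM) (rule prob_space_axioms)
  have "Phi n 0 x = 0" for x by (simp add: Phi_def)
  thus ?case by (simp add: P0.emeasure_space_1)
next
  case (Suc k)
  interpret PS: product_sigma_finite "\<lambda>_. D" by unfold_locales
  define c where "c = lam\<^sup>2 * (B * (w n (Suc k) * real k + W n (Suc k)))\<^sup>2 / 8"
  have ins: "{1..Suc k} = insert (Suc k) {1..k}" by auto
  have "(\<integral>\<^sup>+ x. ennreal (exp (lam * Phi n (Suc k) x)) \<partial>PiM {1..Suc k} (\<lambda>_. D))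
     = (\<integral>\<^sup>+ x. (\<integral>\<^sup>+ y. ennreal (exp (lam * Phi n (Suc k) (x(Suc k := y)))) \<partial>D) \<partial>PiM {1..k} (\<lambda>_. D))"
    unfolding ins
  proof (rule PS.product_nn_integral_insert)
    have "Phi n (Suc k) \<in> borel_measurable (PiM (insert (Suc k) {1..k}) (\<lambda>_. D))"
      using Phi_meas[of n "Suc k"] unfolding ins .
    thus "(\<lambda>x. ennreal (exp (lam * Phi n (Suc k) x))) \<in> borel_measurable (PiM (insert (Suc k) {1..k}) (\<lambda>_. D))"
      by measurable
  qed auto
  also have "\<dots> = (\<integral>\<^sup>+ x. ennreal (exp (lam * Phi n k x)) * (\<integral>\<^sup>+ y. ennreal (exp (lam * Dl n k x y)) \<partial>D) \<partial>PiM {1..k} (\<lambda>_. D))"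
  proof (rule nn_integral_cong)
    fix x assume "x \<in> space (PiM {1..k} (\<lambda>_. D))"
    hence x: "\<And>\<tau>. \<tau> \<in> {1..k} \<Longrightarrow> x \<tau> \<in> space D" by (auto simp: space_PiM)
    have m: "(\<lambda>y. ennreal (exp (lam * Dl n k x y))) \<in> borel_measurable D"
      using Dl_meas[OF x] by measurable
    have "(\<integral>\<^sup>+ y. ennreal (exp (lam * Phi n (Suc k) (x(Suc k := y)))) \<partial>D)
        = (\<integral>\<^sup>+ y. ennreal (exp (lam * Phi n k x)) * ennreal (exp (lam * Dl n k x y)) \<partial>D)"
      by (intro nn_integral_cong) (simp add: Phi_step distrib_left exp_add ennreal_mult)
    also have "\<dots> = ennreal (exp (lam * Phi n k x)) * (\<integral>\<^sup>+ y. ennreal (exp (lam * Dl n k x y)) \<partial>D)"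
      by (rule nn_integral_cmult[OF m])
    finally show "(\<integral>\<^sup>+ y. ennreal (exp (lam * Phi n (Suc k) (x(Suc k := y)))) \<partial>D)
        = ennreal (exp (lam * Phi n k x)) * (\<integral>\<^sup>+ y. ennreal (exp (lam * Dl n k x y)) \<partial>D)" .
  qed
  also have "\<dots> \<le> (\<integral>\<^sup>+ x. ennreal (exp (lam * Phi n k x)) * ennreal (exp c) \<partial>PiM {1..k} (\<lambda>_. D))"
  proof (rule nn_integral_mono)
    fix x assume "x \<in> space (PiM {1..k} (\<lambda>_. D))"
    hence x: "\<And>\<tau>. \<tau> \<in> {1..k} \<Longrightarrow> x \<tau> \<in> space D" by (auto simp: space_PiM)
    show "ennreal (exp (lam * Phi n k x)) * (\<integral>\<^sup>+ y. ennreal (exp (lam * Dl n k x y)) \<partial>D)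
          \<le> ennreal (exp (lam * Phi n k x)) * ennreal (exp c)"
      unfolding c_def by (intro mult_left_mono Dl_hoeff[OF n Suc.prems lam x]) auto
  qed
  also have "\<dots> = (\<integral>\<^sup>+ x. ennreal (exp (lam * Phi n k x)) \<partial>PiM {1..k} (\<lambda>_. D)) * ennreal (exp c)"
    by (rule nn_integral_multc) (use Phi_meas[of n k] in measurable)
  also have "\<dots> \<le> ennreal (exp (lam\<^sup>2 * (\<Sum>j<k. (B * (w n (Suc j) * real j + W n (Suc j)))\<^sup>2) / 8)) * ennreal (exp c)"
    by (intro mult_right_mono Suc.IH) (use Suc.prems in auto)
  also have "\<dots> = ennreal (exp (lam\<^sup>2 * (\<Sum>j<Suc k. (B * (w n (Suc j) * real j + W n (Suc j)))\<^sup>2) / 8))"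
    by (simp add: c_def ennreal_mult[symmetric] exp_add[symmetric] add_divide_distrib distrib_left)
  finally show ?case .
qed

end


lemma harm_S1: "(\<Sum>j\<le>m. (harm m - harm j :: real)) = real m"
proof (induction m)
  case 0 thus ?case by (simp add: harm_def)
next
  case (Suc m)
  have "(\<Sum>j\<le>Suc m. (harm (Suc m) - harm j :: real)) = (\<Sum>j\<le>m. (harm m - harm j + 1/(real m + 1)))"
    by (simp add: harm_Suc inverse_eq_divide algebra_simps)
  also have "\<dots> = real m + (real m + 1) * (1/(real m + 1))" by (simp add: sum.distrib Suc.IH)
  also have "\<dots> = real (Suc m)" by simp
  finally show ?case .
qed

lemma harm_T: "(\<Sum>j\<le>m. (harm m - harm j :: real)\<^sup>2) = 2 * real m - harm m"
proof (induction m)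
  case 0 thus ?case by (simp add: harm_def)
next
  case (Suc m)
  have "(\<Sum>j\<le>Suc m. (harm (Suc m) - harm j :: real)\<^sup>2) = (\<Sum>j\<le>m. (harm m - harm j + 1/(real m + 1))\<^sup>2)"
    by (simp add: harm_Suc inverse_eq_divide algebra_simps)
  also have "\<dots> = (\<Sum>j\<le>m. (harm m - harm j)\<^sup>2 + (2*(1/(real m + 1))) * (harm m - harm j) + (1/(real m + 1))^2)"
  proof (intro sum.cong refl)
    have sq: "(a + c)^2 = a^2 + (2*c)*a + c^2" for a c :: real by (simp add: power2_eq_square algebra_simps)
    fix j show "(harm m - harm j + 1/(real m + 1))\<^sup>2 = (harm m - harm j)\<^sup>2 + (2*(1/(real m + 1))) * (harm m - harm j) + (1/(real m + 1))^2"
      by (rule sq)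
  qed
  also have "\<dots> = (\<Sum>j\<le>m. (harm m - harm j)\<^sup>2) + (2*(1/(real m + 1))) * (\<Sum>j\<le>m. (harm m - harm j)) + (real m + 1) * (1/(real m + 1))^2"
    by (simp add: sum.distrib sum_distrib_left)
  also have "\<dots> = (2 * real m - harm m) + (2*(1/(real m + 1))) * real m + (real m + 1) * (1/(real m + 1))^2"
    by (simp only: Suc.IH harm_S1)
  also have "\<dots> = 2 * real (Suc m) - harm (Suc m)"
  proof -
    have p: "real m + 1 > 0" by simp
    have a: "(real m + 1) * (1/(real m + 1))^2 = 1/(real m+1)" using p by (simp add: power2_eq_square)
    have b: "2*(1/(real m+1))*real m = 2 - 2/(real m + 1)" using p by (simp add: field_simps)
    show ?thesis unfolding a b by (simp add: harm_Suc inverse_eq_divide)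
  qed
  finally show ?case .
qed

lemma harm_sq_bound: "(\<Sum>j\<le>m. (1 + harm m - harm j :: real)\<^sup>2) \<le> 5 * real m + 1"
proof -
  have "(\<Sum>j\<le>m. (1 + harm m - harm j :: real)\<^sup>2) = (\<Sum>j\<le>m. 1 + 2 * (harm m - harm j) + (harm m - harm j)\<^sup>2)"
    by (intro sum.cong refl) (simp add: power2_eq_square algebra_simps)
  also have "\<dots> = (real m + 1) + 2 * (\<Sum>j\<le>m. (harm m - harm j)) + (\<Sum>j\<le>m. (harm m - harm j :: real)\<^sup>2)"
    by (simp add: sum.distrib sum_distrib_left)
  also have "\<dots> = (real m + 1) + 2 * real m + (2 * real m - harm m)"
    by (simp only: harm_S1 harm_T)
  also have "\<dots> \<le> 5 * real m + 1" using harm_nonneg[of m] by simp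
  finally show ?thesis .
qed

context pw begin

lemma V_bound:
  assumes n: "n \<ge> 2"
  shows "(\<Sum>j<n. (B * (w n (Suc j) * real j + W n (Suc j)))\<^sup>2) \<le> 18 * B\<^sup>2 / (real n - 1)"
proof -
  define m where "m = n - 1"
  have nm: "n = Suc m" and m1: "m \<ge> 1" using n by (auto simp: m_def)
  have rm: "real n - 1 = real m" using nm by simp
  have tm: "(B * (w n (Suc j) * real j + W n (Suc j)))\<^sup>2 \<le> (B / real m)\<^sup>2 * (1 + harm m - harm j)\<^sup>2"
    if j: "j \<le> m" for j
  proof -
    have e1: "w n (Suc j) * real j \<le> 1 / real m" "0 \<le> w n (Suc j) * real j"
      using m1 by (auto simp: w_def rm)
    have e2: "W n (Suc j) = (harm m - harm j) / real m" by (simp add: W_def rm m_def)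
    have h: "harm j \<le> (harm m :: real)" using j by (rule harm_mono)
    have "0 \<le> w n (Suc j) * real j + W n (Suc j)" using e1 h e2 by simp
    moreover have "w n (Suc j) * real j + W n (Suc j) \<le> (1 + harm m - harm j) / real m"
      using e1 e2 by (simp add: add_divide_distrib diff_divide_distrib)
    ultimately have "(w n (Suc j) * real j + W n (Suc j))\<^sup>2 \<le> ((1 + harm m - harm j) / real m)\<^sup>2"
      by (auto intro: power_mono)
    hence "B\<^sup>2 * (w n (Suc j) * real j + W n (Suc j))\<^sup>2 \<le> B\<^sup>2 * ((1 + harm m - harm j) / real m)\<^sup>2"
      by (rule mult_left_mono) simp
    thus ?thesis by (simp add: power_mult_distrib power_divide)
  qed
  have "(\<Sum>j<n. (B * (w n (Suc j) * real j + W n (Suc j)))\<^sup>2) \<le> (\<Sum>j\<le>m. (B / real m)\<^sup>2 * (1 + harm m - harm j)\<^sup>2)"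
  proof -
    have "{..<n} = {..m}" using nm by auto
    thus ?thesis by (simp only:) (intro sum_mono tm, auto)
  qed
  also have "\<dots> = (B / real m)\<^sup>2 * (\<Sum>j\<le>m. (1 + harm m - harm j)\<^sup>2)" by (simp add: sum_distrib_left)
  also have "\<dots> \<le> (B / real m)\<^sup>2 * (5 * real m + 1)" by (intro mult_left_mono harm_sq_bound) simp
  also have "\<dots> \<le> (B / real m)\<^sup>2 * (18 * real m)" by (intro mult_left_mono) (use m1 in auto)
  also have "\<dots> = 18 * B\<^sup>2 / (real n - 1)" using m1 by (simp add: rm power2_eq_square field_simps)
  finally show ?thesis .
qed

end


context pw begin

lemma tail:
  assumes n: "n \<ge> 2" and B: "B > 0" and eps: "eps > 0"
  shows "emeasure (PiM {1..n} (\<lambda>_. D)) {x \<in> space (PiM {1..n} (\<lambda>_. D)). eps \<le> Phi n n x}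
          \<le> ennreal (exp (- (real n - 1) * eps\<^sup>2 / (9 * B\<^sup>2)))"
proof -
  let ?M = "PiM {1..n} (\<lambda>_. D)"
  define V0 where "V0 = 18 * B\<^sup>2 / (real n - 1)"
  have V0: "V0 > 0" using n B by (simp add: V0_def)
  define lam where "lam = 4 * eps / V0"
  have lam: "lam > 0" using V0 eps by (simp add: lam_def)
  define A where "A = {x \<in> space ?M. eps \<le> Phi n n x}"
  have Am: "A \<in> sets ?M" unfolding A_def using Phi_meas[of n n] by measurable
  have "emeasure ?M A = (\<integral>\<^sup>+ x. indicator A x \<partial>?M)" using Am by simp
  also have "\<dots> \<le> (\<integral>\<^sup>+ x. ennreal (exp (- lam * eps)) * ennreal (exp (lam * Phi n n x)) \<partial>?M)"
  proof (rule nn_integral_mono)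
    fix x assume "x \<in> space ?M"
    show "indicator A x \<le> ennreal (exp (- lam * eps)) * ennreal (exp (lam * Phi n n x))"
    proof (cases "x \<in> A")
      case True
      hence "eps \<le> Phi n n x" by (simp add: A_def)
      hence "0 \<le> lam * Phi n n x - lam * eps" using lam by (simp add: algebra_simps)
      hence "1 \<le> exp (- lam * eps) * exp (lam * Phi n n x)"
        by (simp add: exp_add[symmetric])
      thus ?thesis using True by (simp add: ennreal_mult[symmetric])
    qed simp
  qed
  also have "\<dots> = ennreal (exp (- lam * eps)) * (\<integral>\<^sup>+ x. ennreal (exp (lam * Phi n n x)) \<partial>?M)"
    by (rule nn_integral_cmult) (use Phi_meas[of n n] in measurable)
  also have "\<dots> \<le> ennreal (exp (- lam * eps)) * ennreal (exp (lam\<^sup>2 * (\<Sum>j<n. (B * (w n (Suc j) * real j + W n (Suc j)))\<^sup>2) / 8))"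
    by (intro mult_left_mono mgf_bound[OF n lam]) auto
  also have "\<dots> \<le> ennreal (exp (- lam * eps)) * ennreal (exp (lam\<^sup>2 * V0 / 8))"
  proof -
    have "lam\<^sup>2 * (\<Sum>j<n. (B * (w n (Suc j) * real j + W n (Suc j)))\<^sup>2) / 8 \<le> lam\<^sup>2 * V0 / 8"
      using V_bound[OF n] unfolding V0_def by (intro divide_right_mono mult_left_mono) auto
    thus ?thesis by (intro mult_left_mono ennreal_leI) simp_all
  qed
  also have "\<dots> = ennreal (exp (- (real n - 1) * eps\<^sup>2 / (9 * B\<^sup>2)))"
  proof -
    have "- lam * eps + lam\<^sup>2 * V0 / 8 = - 2 * eps\<^sup>2 / V0"
      using V0 unfolding lam_def by (simp add: power2_eq_square field_simps)
    also have "\<dots> = - (real n - 1) * eps\<^sup>2 / (9 * B\<^sup>2)"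
      using n B unfolding V0_def by (simp add: field_simps)
    finally show ?thesis by (simp add: ennreal_mult[symmetric] exp_add[symmetric])
  qed
  finally show ?thesis unfolding A_def .
qed

lemma Phi_nn:
  assumes n: "n \<ge> 2"
  shows "Phi n n x = (1 / (real n - 1)) * (\<Sum>t=2..n. (1 / (real t - 1)) * (\<Sum>\<tau>=1..t-1. f (x t) (x \<tau>))) - LL"
proof -
  have Wn: "W n n = 0" by (simp add: W_def)
  have ins: "{1..n} = insert 1 {2..n}" using n by auto
  have tm: "w n t * (\<Sum>\<tau>\<in>{1..<t}. (f (x t) (x \<tau>) - LL))
       = (1 / (real n - 1)) * ((1 / (real t - 1)) * (\<Sum>\<tau>=1..t-1. f (x t) (x \<tau>))) - LL / (real n - 1)"
    if t: "t \<in> {2..n}" for t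
  proof -
    have s: "{1..<t} = {1..t-1}" using t by auto
    have c: "real (card {1..t-1}) = real t - 1" using t by auto
    have t1: "real t - 1 \<noteq> 0" using t by auto
    have n1: "real n - 1 \<noteq> 0" using n by auto
    have aux: "(1/a)*(1/b)*(S - b*L) = (1/a)*((1/b)*S) - L/a" if "a \<noteq> 0" "b \<noteq> 0" for a b S L :: real
      using that by (simp add: field_simps)
    show ?thesis unfolding w_def s sum_subtractf sum_constant c by (rule aux[OF n1 t1])
  qed
  have "Phi n n x = (\<Sum>t\<in>{2..n}. w n t * (\<Sum>\<tau>\<in>{1..<t}. (f (x t) (x \<tau>) - LL)))"
    unfolding Phi_def Wn ins by (simp add: w_def)
  also have "\<dots> = (\<Sum>t\<in>{2..n}. (1 / (real n - 1)) * ((1 / (real t - 1)) * (\<Sum>\<tau>=1..t-1. f (x t) (x \<tau>))) - LL / (real n - 1))"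
    by (intro sum.cong refl tm)
  also have "\<dots> = (1 / (real n - 1)) * (\<Sum>t=2..n. (1 / (real t - 1)) * (\<Sum>\<tau>=1..t-1. f (x t) (x \<tau>))) - real (n - 1) * (LL / (real n - 1))"
    by (simp add: sum_subtractf sum_distrib_left)
  also have "real (n - 1) * (LL / (real n - 1)) = LL" using n by (simp add: of_nat_diff)
  finally show ?thesis .
qed

end


lemma rad_nonneg:
  fixes D :: "'z measure" and H :: "'h set" and l :: "'h \<Rightarrow> 'z \<Rightarrow> 'z \<Rightarrow> real"
  assumes hstar: "hstar \<in> H"
    and l_bounded: "\<forall>h\<in>H. \<forall>z\<in>space D. \<forall>z'\<in>space D. 0 \<le> l h z z' \<and> l h z z' \<le> B"
  shows "0 \<le> rademacher_complexity D H l m"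
  unfolding rademacher_complexity_def
proof (rule integral_nonneg_AE, rule AE_I2)
  fix zs assume zs: "zs \<in> space (PiM {0..m} (\<lambda>_. D))"
  hence zsD: "\<And>j. j \<in> {0..m} \<Longrightarrow> zs j \<in> space D" by (auto simp: space_PiM)
  define E where "E = PiE {1..m} (\<lambda>_. {-1, 1::real})"
  define G where "G h \<epsilon> = (1 / real m) * (\<Sum>\<tau>=1..m. \<epsilon> \<tau> * l h (zs 0) (zs \<tau>))" for h \<epsilon>
  have bdd: "bdd_above ((\<lambda>h. G h \<epsilon>) ` H)" if e: "\<epsilon> \<in> E" for \<epsilon>
  proof (rule bdd_aboveI2)
    fix h assume h: "h \<in> H"
    have "(\<Sum>\<tau>=1..m. \<epsilon> \<tau> * l h (zs 0) (zs \<tau>)) \<le> (\<Sum>\<tau>=1..m. B)"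
    proof (rule sum_mono)
      fix \<tau> assume t: "\<tau> \<in> {1..m}"
      have lb: "0 \<le> l h (zs 0) (zs \<tau>)" "l h (zs 0) (zs \<tau>) \<le> B"
        using l_bounded h zsD[of 0] zsD[of \<tau>] t by auto
      have "\<epsilon> \<tau> \<in> {-1, 1}" using e t by (auto simp: E_def)
      thus "\<epsilon> \<tau> * l h (zs 0) (zs \<tau>) \<le> B" using lb by auto
    qed
    thus "G h \<epsilon> \<le> (1 / real m) * (\<Sum>\<tau>=1..m. B)" unfolding G_def by (intro mult_left_mono) auto
  qed
  define \<nu> where "\<nu> \<epsilon> = (\<lambda>\<tau>\<in>{1..m}. - (\<epsilon> \<tau> :: real))" for \<epsilon>
  have \<nu>E: "\<nu> \<epsilon> \<in> E" if "\<epsilon> \<in> E" for \<epsilon> using that by (auto simp: E_def \<nu>_def PiE_iff)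
  have \<nu>\<nu>: "\<nu> (\<nu> \<epsilon>) = \<epsilon>" if "\<epsilon> \<in> E" for \<epsilon>
    using that by (auto simp: E_def \<nu>_def PiE_iff extensional_def fun_eq_iff)
  have bij: "bij_betw \<nu> E E" by (rule bij_betw_byWitness[where f'=\<nu>]) (auto simp: \<nu>E \<nu>\<nu>)
  have neg: "G hstar (\<nu> \<epsilon>) = - G hstar \<epsilon>" for \<epsilon>
    unfolding G_def \<nu>_def by (simp add: sum_negf)
  have "(\<Sum>\<epsilon>\<in>E. G hstar \<epsilon>) = (\<Sum>\<epsilon>\<in>E. G hstar (\<nu> \<epsilon>))"
    by (rule sum.reindex_bij_betw[OF bij, symmetric])
  also have "\<dots> = - (\<Sum>\<epsilon>\<in>E. G hstar \<epsilon>)" by (simp add: neg sum_negf)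
  finally have z: "(\<Sum>\<epsilon>\<in>E. G hstar \<epsilon>) = 0" by simp
  have "(\<Sum>\<epsilon>\<in>E. G hstar \<epsilon>) \<le> (\<Sum>\<epsilon>\<in>E. (SUP h\<in>H. G h \<epsilon>))"
    by (intro sum_mono cSUP_upper hstar bdd)
  hence "0 \<le> (\<Sum>\<epsilon>\<in>E. (SUP h\<in>H. G h \<epsilon>))" using z by simp
  thus "0 \<le> (\<Sum>\<epsilon>\<in>PiE {1..m} (\<lambda>_. {-1, 1::real}).
              (SUP h\<in>H. (1 / real m) * (\<Sum>\<tau>=1..m. \<epsilon> \<tau> * l h (zs 0) (zs \<tau>)))) / 2 ^ m"
    unfolding E_def G_def by simp
qed



theorem lemma2:
  fixes D :: "'z measure" and H :: "'h set" and l :: "'h \<Rightarrow> 'z \<Rightarrow> 'z \<Rightarrow> real"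
    and B :: real and hstar :: 'h and n :: nat and \<delta> :: real
  assumes D: "prob_space D"
    and l_meas: "\<forall>h\<in>H. (\<lambda>(z, z'). l h z z') \<in> borel_measurable (D \<Otimes>\<^sub>M D)"
    and l_bounded: "\<forall>h\<in>H. \<forall>z\<in>space D. \<forall>z'\<in>space D. 0 \<le> l h z z' \<and> l h z z' \<le> B"
    and sup_meas: "\<forall>m. \<forall>\<epsilon>\<in>PiE {1..m} (\<lambda>_. {-1, 1::real}). (\<lambda>zs. SUP h\<in>H. (1 / real m) * (\<Sum>\<tau>=1..m. \<epsilon> \<tau> * l h (zs 0) (zs \<tau>)))
                        \<in> borel_measurable (PiM {0..m} (\<lambda>_. D))"
    and hstar: "hstar \<in> H" "\<forall>h\<in>H. pop_risk D l hstar \<le> pop_risk D l h"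
    and n: "n \<ge> 2"
    and \<delta>: "\<delta> > 0"
  shows "measure (PiM {1..n} (\<lambda>_. D))
           {zs \<in> space (PiM {1..n} (\<lambda>_. D)).
              (1 / (real n - 1)) * (\<Sum>t=2..n. all_pairs_penalty l hstar zs t)
                \<le> pop_risk D l hstar
                   + (2 / (real n - 1)) * (\<Sum>t=2..n. rademacher_complexity D H l (t - 1))
                   + 3 * B * sqrt (ln (1 / \<delta>) / (real n - 1))}
         \<ge> 1 - \<delta>"
proof -
  interpret P: pw D "l hstar" B
    unfolding pw_def pw_axioms_def using D l_meas l_bounded hstar(1) by auto
  let ?M = "PiM {1..n} (\<lambda>_. D)"
  interpret PM: prob_space ?M by (rule prob_space_PiM) (rule D)
  define Rs where "Rs = (2 / (real n - 1)) * (\<Sum>t=2..n. rademacher_complexity D H l (t - 1))"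
  have Rs0: "0 \<le> Rs" unfolding Rs_def using n
    by (intro mult_nonneg_nonneg sum_nonneg rad_nonneg[OF hstar(1) l_bounded]) auto
  define c where "c = 3 * B * sqrt (ln (1 / \<delta>) / (real n - 1))"
  have LL: "pop_risk D l hstar = P.LL" by (simp add: pop_risk_def P.LL_def)
  define E where "E = {zs \<in> space ?M. (1 / (real n - 1)) * (\<Sum>t=2..n. all_pairs_penalty l hstar zs t)
                \<le> pop_risk D l hstar + Rs + c}"
  have Eeq: "E = {zs \<in> space ?M. P.Phi n n zs \<le> Rs + c}"
    unfolding E_def P.Phi_nn[OF n] LL all_pairs_penalty_def by auto
  have Em: "E \<in> sets ?M" unfolding Eeq using P.Phi_meas[of n n] by measurable
  have goal: "1 - \<delta> \<le> measure ?M E"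
  proof (cases "\<delta> \<ge> 1 \<or> B = 0")
    case True
    show ?thesis
    proof (cases "\<delta> \<ge> 1")
      case True thus ?thesis using measure_nonneg[of ?M E] by linarith
    next
      case False
      hence B0: "B = 0" using \<open>\<delta> \<ge> 1 \<or> B = 0\<close> by auto
      have f0: "l hstar z z' = 0" if "z \<in> space D" "z' \<in> space D" for z z'
        using P.f_bnd[OF that] B0 by auto
      have i0: "(\<integral>z'. l hstar z z' \<partial>D) = 0" if "z \<in> space D" for z
      proof -
        have "(\<integral>z'. l hstar z z' \<partial>D) = (\<integral>z'. 0 \<partial>D)"
          by (rule Bochner_Integration.integral_cong) (auto simp: f0 that)
        thus ?thesis by simp
      qed
      have "P.LL = (\<integral>z. 0 \<partial>D)" unfolding P.LL_def
        by (rule Bochner_Integration.integral_cong) (auto simp: i0)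
      hence "P.LL = 0" by simp
      have S0: "(1 / (real n - 1)) * (\<Sum>t=2..n. all_pairs_penalty l hstar x t) = 0"
        if x: "x \<in> space ?M" for x
      proof -
        have xD: "\<And>j. j \<in> {1..n} \<Longrightarrow> x j \<in> space D" using x by (auto simp: space_PiM)
        have "all_pairs_penalty l hstar x t = 0" if t: "t \<in> {2..n}" for t
          unfolding all_pairs_penalty_def using t by (auto intro!: sum.neutral f0 xD)
        thus ?thesis by simp
      qed
      have Ez: "E = space ?M" unfolding E_def LL c_def
      proof (intro set_eqI iffI)
        fix x assume "x \<in> space ?M"
        thus "x \<in> {zs \<in> space ?M. (1 / (real n - 1)) * (\<Sum>t=2..n. all_pairs_penalty l hstar zs t)
                \<le> P.LL + Rs + 3 * B * sqrt (ln (1 / \<delta>) / (real n - 1))}"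
        proof (intro CollectI conjI)
          have a: "(1 / (real n - 1)) * (\<Sum>t=2..n. all_pairs_penalty l hstar x t) = 0" by (rule S0) fact
          have b: "3 * B * sqrt (ln (1 / \<delta>) / (real n - 1)) = 0" using B0 by simp
          show "(1 / (real n - 1)) * (\<Sum>t=2..n. all_pairs_penalty l hstar x t)
                \<le> P.LL + Rs + 3 * B * sqrt (ln (1 / \<delta>) / (real n - 1))"
            using a b Rs0 \<open>P.LL = 0\<close> by linarith
        qed auto
      qed auto
      show ?thesis unfolding Ez using PM.prob_space \<delta> by simp
    qed
  next
    case False
    hence d1: "\<delta> < 1" and Bp: "B > 0" using P.B_nonneg by auto
    have lnp: "ln (1 / \<delta>) > 0" using d1 \<delta> by simp
    have m0: "real n - 1 > 0" using n by simp
    have cp: "c > 0" unfolding c_def using Bp lnp m0 by simp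
    have c2: "c\<^sup>2 = 9 * B\<^sup>2 * (ln (1 / \<delta>) / (real n - 1))"
      unfolding c_def using lnp m0 by (simp add: power_mult_distrib)
    define A where "A = {x \<in> space ?M. c \<le> P.Phi n n x}"
    have Am: "A \<in> sets ?M" unfolding A_def using P.Phi_meas[of n n] by measurable
    have "emeasure ?M A \<le> ennreal (exp (- (real n - 1) * c\<^sup>2 / (9 * B\<^sup>2)))"
      unfolding A_def by (rule P.tail[OF n Bp cp])
    also have "- (real n - 1) * c\<^sup>2 / (9 * B\<^sup>2) = ln \<delta>"
      unfolding c2 using Bp m0 \<delta> by (simp add: ln_div field_simps)
    finally have "emeasure ?M A \<le> ennreal \<delta>" using \<delta> by simp
    hence "ennreal (measure ?M A) \<le> ennreal \<delta>" by (simp only: PM.emeasure_eq_measure)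
    hence mA: "measure ?M A \<le> \<delta>" using \<delta> by (subst (asm) ennreal_le_iff) auto
    have "space ?M - A \<subseteq> E" unfolding A_def Eeq using Rs0 by auto
    hence "measure ?M (space ?M - A) \<le> measure ?M E" by (intro PM.finite_measure_mono Em)
    moreover have "measure ?M (space ?M - A) = 1 - measure ?M A" by (rule PM.prob_compl[OF Am])
    ultimately show ?thesis using mA by linarith
  qed
  thus ?thesis unfolding E_def Rs_def c_def .
qed


end
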